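(* Let $(\mathbb{I},J)$ be the almost-complex Iwasawa manifold described in the context. Then $h^{1,0}_{\mathrm{Dol}}=1$ (spanned by $\varphi^3$), $h^{2,0}_{\mathrm{Dol}}=1$ (spanned by $i\varphi^1\wedge\varphi^3+\varphi^2\wedge\varphi^3$), and $h^{3,0}_{\mathrm{Dol}}=0$.
   Context: General notions. For an almost-complex manifold $(X,J)$, $A^k(X)=\bigoplus_{p+q=k}A^{p,q}(X)$ and $d=\mu+\partial+\overline{\partial}+\bar\mu$ with $\mu:A^{p,q}\to A^{p+2,q-1}$, $\partial:A^{p,q}\to A^{p+1,q}$, $\overline{\partial}:A^{p,q}\to A^{p,q+1}$, $\bar\mu:A^{p,q}\to A^{p-1,q+2}$. The almost-complex Dolbeault cohomology (of Cirici–Wilson) in bidegree $(p,0)$ is $H^{p,0}_{\mathrm{Dol}}(X)=\{\psi\in A^{p,0}(X):\overline{\partial}\psi=0,\ \bar\mu\psi=0\}$, and $h^{p,0}_{\mathrm{Dol}}$ is its complex dimension. The Iwasawa manifold. $\mathbb{H}_3$ is the complex Heisenberg group of matrices $\begin{pmatrix}1&z_1&z_3\\0&1&z_2\\0&0&1\end{pmatrix}$, $z_j=x_j+iy_j\in\mathbb{C}$, $\Gamma\subset\mathbb{H}_3$ the subgroup with $z_1,z_2,z_3\in\mathbb{Z}[i]$, and $\mathbb{I}=\Gamma\backslash\mathbb{H}_3$. Left-invariant real $1$-forms: $e^1=dx_1$, $e^2=dy_1$, $e^3=dx_2$, $e^4=dy_2$, $e^5=dx_3-x_1dx_2+y_1dy_2$,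 $e^6=dy_3-x_1dy_2-y_1dx_2$, with $de^1=\dots=de^4=0$, $de^5=-e^{13}+e^{24}$, $de^6=-e^{14}-e^{23}$. $J$ is the almost-complex structure whose $(1,0)$-forms are spanned by $\varphi^1=e^1+ie^6$, $\varphi^2=e^2+ie^5$, $\varphi^3=e^3+ie^4$. *)

theory Defs
  imports "HOL-Analysis.Analysis" "HOL-Library.Function_Algebras"
begin

text \<open>A point of H_3 is the triple (z1,z2,z3) of the matrix [[1,z1,z3],[0,1,z2],[0,0,1]].\<close>
type_synonym pt = "complex \<times> complex \<times> complex"

definition hmult :: "pt \<Rightarrow> pt \<Rightarrow> pt" where
  "hmult a b = (fst a + fst b, fst (snd a) + fst (snd b),
                snd (snd a) + snd (snd b) + fst a * fst (snd b))"

definition gauss_int :: "complex \<Rightarrow> bool" where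
  "gauss_int z \<longleftrightarrow> Re z \<in> \<int> \<and> Im z \<in> \<int>"

definition Gamma :: "pt set" where
  "Gamma = {(a, b, c). gauss_int a \<and> gauss_int b \<and> gauss_int c}"

fun Ck :: "nat \<Rightarrow> (pt \<Rightarrow> complex) \<Rightarrow> bool" where
  "Ck 0 f = continuous_on UNIV f"
| "Ck (Suc k) f = ((\<forall>p. f differentiable (at p)) \<and>
                    (\<forall>v. Ck k (\<lambda>p. frechet_derivative f (at p) v)))"

definition smooth_fun :: "(pt \<Rightarrow> complex) \<Rightarrow> bool" where
  "smooth_fun f \<longleftrightarrow> (\<forall>k. Ck k f)"

text \<open>Smooth complex functions on the Iwasawa manifold Gamma\textbackslash H_3 =
  smooth functions on H_3 invariant under left translation by Gamma.\<close>
definition Iw_fun :: "(pt \<Rightarrow> complex) \<Rightarrow> bool" where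
  "Iw_fun f \<longleftrightarrow> smooth_fun f \<and> (\<forall>\<gamma>\<in>Gamma. \<forall>p. f (hmult \<gamma> p) = f p)"

text \<open>Left-invariant vector fields E_1..E_6, the frame dual to e^1..e^6:
  E_i f (p) = d/dt|_0 f(p * t X_i).\<close>
definition lie_gen :: "nat \<Rightarrow> pt" where
  "lie_gen i = (if i = 1 then (1, 0, 0) else if i = 2 then (\<i>, 0, 0)
           else if i = 3 then (0, 1, 0) else if i = 4 then (0, \<i>, 0)
           else if i = 5 then (0, 0, 1) else if i = 6 then (0, 0, \<i>) else 0)"

definition Efield :: "nat \<Rightarrow> (pt \<Rightarrow> complex) \<Rightarrow> pt \<Rightarrow> complex" where
  "Efield i f p = vector_derivative (\<lambda>t::real. f (hmult p (t *\<^sub>R lie_gen i))) (at 0)"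

text \<open>A complex form is given by its coefficients w.r.t. the global coframe
  theta_0..theta_5 = phi^1, phi^2, phi^3, conj phi^1, conj phi^2, conj phi^3:
  the form is Sum_S omega(S) theta^S (S a subset of {0..5}, increasing wedge).\<close>
type_synonym form = "nat set \<Rightarrow> pt \<Rightarrow> complex"

definition cform :: "complex \<Rightarrow> form \<Rightarrow> form" where
  "cform c \<omega> = (\<lambda>S p. c * \<omega> S p)"

definition fmul :: "(pt \<Rightarrow> complex) \<Rightarrow> form \<Rightarrow> form" where
  "fmul f \<omega> = (\<lambda>S p. f p * \<omega> S p)"

definition wsign :: "nat set \<Rightarrow> nat set \<Rightarrow> complex" where
  "wsign A B = (-1) ^ card {(i, j). i \<in> A \<and> j \<in> B \<and> j < i}"

definition wedge :: "form \<Rightarrow> form \<Rightarrow> form" where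
  "wedge a b = (\<lambda>S p. \<Sum>A\<in>Pow S. wsign A (S - A) * a A p * b (S - A) p)"

definition theta :: "nat \<Rightarrow> form" where
  "theta k = (\<lambda>S p. if S = {k} then 1 else 0)"

definition one_form :: form where
  "one_form = (\<lambda>S p. if S = {} then 1 else 0)"

primrec monol :: "nat list \<Rightarrow> form" where
  "monol [] = one_form"
| "monol (k # ks) = wedge (theta k) (monol ks)"

text \<open>Real coframe e^1..e^6 (phi^1 = e^1 + i e^6, phi^2 = e^2 + i e^5, phi^3 = e^3 + i e^4).\<close>
definition e_form :: "nat \<Rightarrow> form" where
  "e_form i = (if i = 1 then cform (1/2) (theta 0 + theta 3)
          else if i = 6 then cform (1/(2*\<i>)) (theta 0 - theta 3)
          else if i = 2 then cform (1/2) (theta 1 + theta 4)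
          else if i = 5 then cform (1/(2*\<i>)) (theta 1 - theta 4)
          else if i = 3 then cform (1/2) (theta 2 + theta 5)
          else if i = 4 then cform (1/(2*\<i>)) (theta 2 - theta 5)
          else 0)"

definition de_form :: "nat \<Rightarrow> form" where
  "de_form i = (if i = 5 then - wedge (e_form 1) (e_form 3) + wedge (e_form 2) (e_form 4)
           else if i = 6 then - wedge (e_form 1) (e_form 4) - wedge (e_form 2) (e_form 3)
           else 0)"

definition dtheta :: "nat \<Rightarrow> form" where
  "dtheta k = (if k = 0 then de_form 1 + cform \<i> (de_form 6)
          else if k = 1 then de_form 2 + cform \<i> (de_form 5)
          else if k = 2 then de_form 3 + cform \<i> (de_form 4)
          else if k = 3 then de_form 1 - cform \<i> (de_form 6)
          else if k = 4 then de_form 2 - cform \<i> (de_form 5)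
          else if k = 5 then de_form 3 - cform \<i> (de_form 4)
          else 0)"

primrec dmonol :: "nat list \<Rightarrow> form" where
  "dmonol [] = 0"
| "dmonol (k # ks) = wedge (dtheta k) (monol ks) - wedge (theta k) (dmonol ks)"

definition dfun :: "(pt \<Rightarrow> complex) \<Rightarrow> form" where
  "dfun f = (\<Sum>i\<in>{1..6}. fmul (Efield i f) (e_form i))"

definition dform :: "form \<Rightarrow> form" where
  "dform \<omega> = (\<Sum>S\<in>Pow {0..<6}.
      wedge (dfun (\<omega> S)) (monol (sorted_list_of_set S))
      + fmul (\<omega> S) (dmonol (sorted_list_of_set S)))"

definition of_type :: "nat \<Rightarrow> nat \<Rightarrow> nat set \<Rightarrow> bool" where
  "of_type p q S \<longleftrightarrow> S \<subseteq> {0..<6} \<and> card (S \<inter> {0,1,2}) = p \<and> card (S \<inter> {3,4,5}) = q"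

definition pq_form :: "nat \<Rightarrow> nat \<Rightarrow> form \<Rightarrow> bool" where
  "pq_form p q \<omega> \<longleftrightarrow> (\<forall>S. \<not> of_type p q S \<longrightarrow> \<omega> S = (\<lambda>_. 0)) \<and> (\<forall>S. Iw_fun (\<omega> S))"

definition proj :: "nat \<Rightarrow> nat \<Rightarrow> form \<Rightarrow> form" where
  "proj p q \<omega> = (\<lambda>S. if of_type p q S then \<omega> S else (\<lambda>_. 0))"

definition dbar :: "nat \<Rightarrow> nat \<Rightarrow> form \<Rightarrow> form" where
  "dbar p q \<omega> = proj p (Suc q) (dform \<omega>)"

definition mubar :: "nat \<Rightarrow> nat \<Rightarrow> form \<Rightarrow> form" where
  "mubar p q \<omega> = proj (p - 1) (q + 2) (dform \<omega>)"

definition H_Dol_p0 :: "nat \<Rightarrow> form set" where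
  "H_Dol_p0 p = {\<psi>. pq_form p 0 \<psi> \<and> dbar p 0 \<psi> = 0 \<and> mubar p 0 \<psi> = 0}"

definition h_Dol_p0 :: "nat \<Rightarrow> nat" where
  "h_Dol_p0 p = vector_space.dim cform (H_Dol_p0 p)"

end

theory Submission
  imports Defs "HOL-Complex_Analysis.Complex_Analysis"
begin



definition bas :: "nat set \<Rightarrow> (pt \<Rightarrow> complex) \<Rightarrow> form" where
  "bas T g = (\<lambda>S. if S = T then g else (\<lambda>_. 0))"

lemma bas_apply: "bas T g S x = (if S = T then g x else 0)"
  by (simp add: bas_def)

lemma wedge_bas:
  assumes "finite A" "finite B"
  shows "wedge (bas A g) (bas B h) =
         (if A \<inter> B = {} then bas (A \<union> B) (\<lambda>x. wsign A B * g x * h x) else 0)"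
proof (intro ext)
  fix S x
  show "wedge (bas A g) (bas B h) S x =
        (if A \<inter> B = {} then bas (A \<union> B) (\<lambda>x. wsign A B * g x * h x) else 0) S x"
  proof (cases "A \<inter> B = {} \<and> S = A \<union> B")
    case True
    then have SA: "S - A = B" by blast
    have "wedge (bas A g) (bas B h) S x =
          (\<Sum>A'\<in>Pow S. if A' = A then wsign A B * g x * h x else 0)"
      unfolding wedge_def bas_def
      by (rule sum.cong) (auto simp: SA)
    also have "\<dots> = wsign A B * g x * h x"
      using True assms by (simp add: sum.delta)
    finally show ?thesis using True by (simp add: bas_def)
  next
    case False
    have "wedge (bas A g) (bas B h) S x = (\<Sum>A'\<in>Pow S. 0)"
      unfolding wedge_def bas_def
      by (rule sum.cong) (use False in auto)
    then show ?thesis using False by (auto simp: bas_def)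
  qed
qed

lemma wedge_add_left: "wedge (a + b) c = wedge a c + wedge b c"
  by (auto simp: wedge_def fun_eq_iff algebra_simps sum.distrib)
lemma wedge_add_right: "wedge a (b + c) = wedge a b + wedge a c"
  by (auto simp: wedge_def fun_eq_iff algebra_simps sum.distrib)
lemma wedge_diff_left: "wedge (a - b) c = wedge a c - wedge b c"
  by (auto simp: wedge_def fun_eq_iff algebra_simps sum_subtractf)
lemma wedge_diff_right: "wedge a (b - c) = wedge a b - wedge a c"
  by (auto simp: wedge_def fun_eq_iff algebra_simps sum_subtractf)
lemma wedge_uminus_left: "wedge (- a) c = - wedge a c"
  by (auto simp: wedge_def fun_eq_iff sum_negf)
lemma wedge_uminus_right: "wedge a (- c) = - wedge a c"
  by (auto simp: wedge_def fun_eq_iff sum_negf)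
lemma wedge_zero_left: "wedge 0 c = 0"
  by (auto simp: wedge_def fun_eq_iff)
lemma wedge_zero_right: "wedge a 0 = 0"
  by (auto simp: wedge_def fun_eq_iff)
lemma wedge_cform_left: "wedge (cform k a) c = cform k (wedge a c)"
  by (auto simp: wedge_def cform_def fun_eq_iff sum_distrib_left algebra_simps)
lemma wedge_cform_right: "wedge a (cform k c) = cform k (wedge a c)"
  by (auto simp: wedge_def cform_def fun_eq_iff sum_distrib_left algebra_simps)
lemma wedge_fmul_left: "wedge (fmul f a) c = fmul f (wedge a c)"
  by (auto simp: wedge_def fmul_def fun_eq_iff sum_distrib_left algebra_simps)
lemma wedge_fmul_right: "wedge a (fmul f c) = fmul f (wedge a c)"
  by (auto simp: wedge_def fmul_def fun_eq_iff sum_distrib_left algebra_simps)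

lemma theta_bas: "theta k = bas {k} (\<lambda>_. 1)"
  by (auto simp: theta_def bas_def fun_eq_iff)
lemma one_bas: "one_form = bas {} (\<lambda>_. 1)"
  by (auto simp: one_form_def bas_def fun_eq_iff)

definition cnt :: "nat \<Rightarrow> nat set \<Rightarrow> nat" where
  "cnt a B = card {j\<in>B. j < a}"

lemma cnt_empty: "cnt a {} = 0"
  by (simp add: cnt_def)

lemma cnt_insert: "b \<notin> B \<Longrightarrow> finite B \<Longrightarrow>
   cnt a (insert b B) = (if b < a then Suc (cnt a B) else cnt a B)"
proof -
  assume b: "b \<notin> B" and f: "finite B"
  have "{j\<in>insert b B. j < a} = (if b < a then insert b {j\<in>B. j < a} else {j\<in>B. j < a})"
    by auto
  then show ?thesis using b f by (simp add: cnt_def)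
qed

lemma wsign_empty: "wsign {} B = 1"
  by (simp add: wsign_def)

lemma wsign_insert:
  assumes "a \<notin> A" "finite A" "finite B"
  shows "wsign (insert a A) B = (-1) ^ cnt a B * wsign A B"
proof -
  let ?P = "\<lambda>A. {(i, j). i \<in> A \<and> j \<in> B \<and> j < i}"
  have fin: "finite (?P A)"
    by (rule finite_subset[of _ "A \<times> B"]) (use assms in auto)
  have eq: "?P (insert a A) = (\<lambda>j. (a, j)) ` {j\<in>B. j < a} \<union> ?P A" by auto
  have disj: "(\<lambda>j. (a, j)) ` {j\<in>B. j < a} \<inter> ?P A = {}" using assms(1) by auto
  have "card (?P (insert a A)) = card {j\<in>B. j < a} + card (?P A)"
    unfolding eq
    by (subst card_Un_disjoint) (use disj fin assms in \<open>auto simp: card_image inj_on_def\<close>)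
  then show ?thesis by (simp add: wsign_def power_add cnt_def)
qed

lemmas wsign_eval = wsign_insert wsign_empty cnt_insert cnt_empty

lemmas form_eval = cform_def fmul_def bas_apply set_eq_subset

lemmas wedge_lin = wedge_add_left wedge_add_right wedge_diff_left wedge_diff_right
  wedge_uminus_left wedge_uminus_right wedge_zero_left wedge_zero_right
  wedge_cform_left wedge_cform_right wedge_fmul_left wedge_fmul_right wedge_bas

lemma fmul_zero: "fmul (\<lambda>_. 0) a = 0"
  by (simp add: fmul_def fun_eq_iff)
lemma Efield_zero: "Efield i (\<lambda>_. 0) = (\<lambda>_. 0)"
  by (simp add: Efield_def fun_eq_iff)
lemma dfun_zero: "dfun (\<lambda>_. 0) = 0"
  by (simp add: dfun_def Efield_zero fmul_zero)

lemma dform_reduce: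
  assumes "\<And>T. T \<notin> TT \<Longrightarrow> \<psi> T = (\<lambda>_. 0)" "TT \<subseteq> Pow {0..<6}"
  shows "dform \<psi> = (\<Sum>T\<in>TT. wedge (dfun (\<psi> T)) (monol (sorted_list_of_set T))
      + fmul (\<psi> T) (dmonol (sorted_list_of_set T)))"
  unfolding dform_def
  by (rule sum.mono_neutral_right) (use assms(2) in \<open>auto simp: assms(1) dfun_zero fmul_zero wedge_zero_left\<close>)

lemma six: "{1..6::nat} = {1,2,3,4,5,6}" by auto

lemma dfun_expand: "dfun f = fmul (Efield 1 f) (e_form 1) + fmul (Efield 2 f) (e_form 2)
  + fmul (Efield 3 f) (e_form 3) + fmul (Efield 4 f) (e_form 4) + fmul (Efield 5 f) (e_form 5)
  + fmul (Efield 6 f) (e_form 6)"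
  unfolding dfun_def six by (simp add: add_ac)

definition supp :: "nat set set \<Rightarrow> form \<Rightarrow> bool" where
  "supp TT \<psi> \<longleftrightarrow> (\<forall>T. T \<notin> TT \<longrightarrow> \<psi> T = (\<lambda>_. 0))"

lemma red1:
  assumes "supp {{0},{1},{2}} \<psi>"
  shows "dform \<psi> = (\<Sum>T\<in>{{0},{1},{2}}. wedge (dfun (\<psi> T)) (monol (sorted_list_of_set T))
      + fmul (\<psi> T) (dmonol (sorted_list_of_set T)))"
  by (rule dform_reduce) (use assms in \<open>auto simp: supp_def\<close>)

lemma red2:
  assumes "supp {{0,1},{0,2},{1,2}} \<psi>"
  shows "dform \<psi> = (wedge (dfun (\<psi> {0,1})) (monol [0,1]) + fmul (\<psi> {0,1}) (dmonol [0,1]))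
    + (wedge (dfun (\<psi> {0,2})) (monol [0,2]) + fmul (\<psi> {0,2}) (dmonol [0,2]))
    + (wedge (dfun (\<psi> {1,2})) (monol [1,2]) + fmul (\<psi> {1,2}) (dmonol [1,2]))"
proof -
  have "dform \<psi> = (\<Sum>T\<in>{{0,1},{0,2},{1,2}}. wedge (dfun (\<psi> T)) (monol (sorted_list_of_set T))
      + fmul (\<psi> T) (dmonol (sorted_list_of_set T)))"
    by (rule dform_reduce) (use assms in \<open>auto simp: supp_def\<close>)
  then show ?thesis
    by (simp add: set_eq_subset add_ac)
qed

lemma red3:
  assumes "supp {{0,1,2}} \<psi>"
  shows "dform \<psi> = (\<Sum>T\<in>{{0,1,2}}. wedge (dfun (\<psi> T)) (monol (sorted_list_of_set T))
      + fmul (\<psi> T) (dmonol (sorted_list_of_set T)))"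
  by (rule dform_reduce) (use assms in \<open>auto simp: supp_def\<close>)

lemma ev1_03:
  assumes "supp {{0},{1},{2}} \<psi>"
  shows "dform \<psi> {0,3} x = (- 1/2) * Efield 1 (\<psi> {0}) x + (- \<i>*1/2) * Efield 6 (\<psi> {0}) x"
  unfolding red1[OF assms]
  apply (simp add: dfun_expand dtheta_def de_form_def e_form_def theta_bas one_bas wedge_lin)
  apply (simp add: wsign_eval form_eval)
  apply (simp add: algebra_simps)?
  done

lemma ev1_04:
  assumes "supp {{0},{1},{2}} \<psi>"
  shows "dform \<psi> {0,4} x = (- 1/2) * Efield 2 (\<psi> {0}) x + (- \<i>*1/2) * Efield 5 (\<psi> {0}) x"
  unfolding red1[OF assms]
  apply (simp add: dfun_expand dtheta_def de_form_def e_form_def theta_bas one_bas wedge_lin)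
  apply (simp add: wsign_eval form_eval)
  apply (simp add: algebra_simps)?
  done

lemma ev1_05:
  assumes "supp {{0},{1},{2}} \<psi>"
  shows "dform \<psi> {0,5} x = (- 1/2) * Efield 3 (\<psi> {0}) x + (- \<i>*1/2) * Efield 4 (\<psi> {0}) x + (1/4) * \<psi> {0} x + (- \<i>*1/4) * \<psi> {1} x"
  unfolding red1[OF assms]
  apply (simp add: dfun_expand dtheta_def de_form_def e_form_def theta_bas one_bas wedge_lin)
  apply (simp add: wsign_eval form_eval)
  apply (simp add: algebra_simps)?
  done

lemma ev1_13:
  assumes "supp {{0},{1},{2}} \<psi>"
  shows "dform \<psi> {1,3} x = (- 1/2) * Efield 1 (\<psi> {1}) x + (- \<i>*1/2) * Efield 6 (\<psi> {1}) x"
  unfolding red1[OF assms]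
  apply (simp add: dfun_expand dtheta_def de_form_def e_form_def theta_bas one_bas wedge_lin)
  apply (simp add: wsign_eval form_eval)
  apply (simp add: algebra_simps)?
  done

lemma ev1_14:
  assumes "supp {{0},{1},{2}} \<psi>"
  shows "dform \<psi> {1,4} x = (- 1/2) * Efield 2 (\<psi> {1}) x + (- \<i>*1/2) * Efield 5 (\<psi> {1}) x"
  unfolding red1[OF assms]
  apply (simp add: dfun_expand dtheta_def de_form_def e_form_def theta_bas one_bas wedge_lin)
  apply (simp add: wsign_eval form_eval)
  apply (simp add: algebra_simps)?
  done

lemma ev1_15:
  assumes "supp {{0},{1},{2}} \<psi>"
  shows "dform \<psi> {1,5} x = (- \<i>*1/4) * \<psi> {0} x + (- 1/2) * Efield 3 (\<psi> {1}) x + (- \<i>*1/2) * Efield 4 (\<psi> {1}) x + (- 1/4) * \<psi> {1} x"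
  unfolding red1[OF assms]
  apply (simp add: dfun_expand dtheta_def de_form_def e_form_def theta_bas one_bas wedge_lin)
  apply (simp add: wsign_eval form_eval)
  apply (simp add: algebra_simps)?
  done

lemma ev1_23:
  assumes "supp {{0},{1},{2}} \<psi>"
  shows "dform \<psi> {2,3} x = (1/4) * \<psi> {0} x + (\<i>*1/4) * \<psi> {1} x + (- 1/2) * Efield 1 (\<psi> {2}) x + (- \<i>*1/2) * Efield 6 (\<psi> {2}) x"
  unfolding red1[OF assms]
  apply (simp add: dfun_expand dtheta_def de_form_def e_form_def theta_bas one_bas wedge_lin)
  apply (simp add: wsign_eval form_eval)
  apply (simp add: algebra_simps)?
  done

lemma ev1_24:
  assumes "supp {{0},{1},{2}} \<psi>"
  shows "dform \<psi> {2,4} x = (\<i>*1/4) * \<psi> {0} x + (- 1/4) * \<psi> {1} x + (- 1/2) * Efield 2 (\<psi> {2}) x + (- \<i>*1/2) * Efield 5 (\<psi> {2}) x"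
  unfolding red1[OF assms]
  apply (simp add: dfun_expand dtheta_def de_form_def e_form_def theta_bas one_bas wedge_lin)
  apply (simp add: wsign_eval form_eval)
  apply (simp add: algebra_simps)?
  done

lemma ev1_25:
  assumes "supp {{0},{1},{2}} \<psi>"
  shows "dform \<psi> {2,5} x = (- 1/2) * Efield 3 (\<psi> {2}) x + (- \<i>*1/2) * Efield 4 (\<psi> {2}) x"
  unfolding red1[OF assms]
  apply (simp add: dfun_expand dtheta_def de_form_def e_form_def theta_bas one_bas wedge_lin)
  apply (simp add: wsign_eval form_eval)
  apply (simp add: algebra_simps)?
  done

lemma ev1_34:
  assumes "supp {{0},{1},{2}} \<psi>"
  shows "dform \<psi> {3,4} x = 0"
  unfolding red1[OF assms]
  apply (simp add: dfun_expand dtheta_def de_form_def e_form_def theta_bas one_bas wedge_lin)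
  apply (simp add: wsign_eval form_eval)
  apply (simp add: algebra_simps)?
  done

lemma ev1_35:
  assumes "supp {{0},{1},{2}} \<psi>"
  shows "dform \<psi> {3,5} x = (1/4) * \<psi> {0} x + (- \<i>*1/4) * \<psi> {1} x"
  unfolding red1[OF assms]
  apply (simp add: dfun_expand dtheta_def de_form_def e_form_def theta_bas one_bas wedge_lin)
  apply (simp add: wsign_eval form_eval)
  apply (simp add: algebra_simps)?
  done

lemma ev1_45:
  assumes "supp {{0},{1},{2}} \<psi>"
  shows "dform \<psi> {4,5} x = (- \<i>*1/4) * \<psi> {0} x + (- 1/4) * \<psi> {1} x"
  unfolding red1[OF assms]
  apply (simp add: dfun_expand dtheta_def de_form_def e_form_def theta_bas one_bas wedge_lin)
  apply (simp add: wsign_eval form_eval)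
  apply (simp add: algebra_simps)?
  done

lemma ev3_0235:
  assumes "supp {{0,1,2}} \<psi>"
  shows "dform \<psi> {0,2,3,5} x = (\<i>*1/4) * \<psi> {0,1,2} x"
  unfolding red3[OF assms]
  apply (simp add: dfun_expand dtheta_def de_form_def e_form_def theta_bas one_bas wedge_lin)
  apply (simp add: wsign_eval form_eval)
  apply (simp add: algebra_simps)?
  done

lemma ev2_013:
  assumes "supp {{0,1},{0,2},{1,2}} \<psi>"
  shows "dform \<psi> {0,1,3} x = (1/2) * Efield 1 (\<psi> {0,1}) x + (\<i>*1/2) * Efield 6 (\<psi> {0,1}) x"
  unfolding red2[OF assms]
  apply (simp add: dfun_expand dtheta_def de_form_def e_form_def theta_bas one_bas wedge_lin)
  apply (simp add: wsign_eval form_eval)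
  apply (simp add: algebra_simps)?
  done

lemma ev2_014:
  assumes "supp {{0,1},{0,2},{1,2}} \<psi>"
  shows "dform \<psi> {0,1,4} x = (1/2) * Efield 2 (\<psi> {0,1}) x + (\<i>*1/2) * Efield 5 (\<psi> {0,1}) x"
  unfolding red2[OF assms]
  apply (simp add: dfun_expand dtheta_def de_form_def e_form_def theta_bas one_bas wedge_lin)
  apply (simp add: wsign_eval form_eval)
  apply (simp add: algebra_simps)?
  done

lemma ev2_015:
  assumes "supp {{0,1},{0,2},{1,2}} \<psi>"
  shows "dform \<psi> {0,1,5} x = (1/2) * Efield 3 (\<psi> {0,1}) x + (\<i>*1/2) * Efield 4 (\<psi> {0,1}) x"
  unfolding red2[OF assms]
  apply (simp add: dfun_expand dtheta_def de_form_def e_form_def theta_bas one_bas wedge_lin)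
  apply (simp add: wsign_eval form_eval)
  apply (simp add: algebra_simps)?
  done

lemma ev2_023:
  assumes "supp {{0,1},{0,2},{1,2}} \<psi>"
  shows "dform \<psi> {0,2,3} x = (- \<i>*1/4) * \<psi> {0,1} x + (1/2) * Efield 1 (\<psi> {0,2}) x + (\<i>*1/2) * Efield 6 (\<psi> {0,2}) x"
  unfolding red2[OF assms]
  apply (simp add: dfun_expand dtheta_def de_form_def e_form_def theta_bas one_bas wedge_lin)
  apply (simp add: wsign_eval form_eval)
  apply (simp add: algebra_simps)?
  done

lemma ev2_024:
  assumes "supp {{0,1},{0,2},{1,2}} \<psi>"
  shows "dform \<psi> {0,2,4} x = (1/4) * \<psi> {0,1} x + (1/2) * Efield 2 (\<psi> {0,2}) x + (\<i>*1/2) * Efield 5 (\<psi> {0,2}) x"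
  unfolding red2[OF assms]
  apply (simp add: dfun_expand dtheta_def de_form_def e_form_def theta_bas one_bas wedge_lin)
  apply (simp add: wsign_eval form_eval)
  apply (simp add: algebra_simps)?
  done

lemma ev2_025:
  assumes "supp {{0,1},{0,2},{1,2}} \<psi>"
  shows "dform \<psi> {0,2,5} x = (1/2) * Efield 3 (\<psi> {0,2}) x + (\<i>*1/2) * Efield 4 (\<psi> {0,2}) x + (- 1/4) * \<psi> {0,2} x + (\<i>*1/4) * \<psi> {1,2} x"
  unfolding red2[OF assms]
  apply (simp add: dfun_expand dtheta_def de_form_def e_form_def theta_bas one_bas wedge_lin)
  apply (simp add: wsign_eval form_eval)
  apply (simp add: algebra_simps)?
  done

lemma ev2_123:
  assumes "supp {{0,1},{0,2},{1,2}} \<psi>"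
  shows "dform \<psi> {1,2,3} x = (1/4) * \<psi> {0,1} x + (1/2) * Efield 1 (\<psi> {1,2}) x + (\<i>*1/2) * Efield 6 (\<psi> {1,2}) x"
  unfolding red2[OF assms]
  apply (simp add: dfun_expand dtheta_def de_form_def e_form_def theta_bas one_bas wedge_lin)
  apply (simp add: wsign_eval form_eval)
  apply (simp add: algebra_simps)?
  done

lemma ev2_124:
  assumes "supp {{0,1},{0,2},{1,2}} \<psi>"
  shows "dform \<psi> {1,2,4} x = (\<i>*1/4) * \<psi> {0,1} x + (1/2) * Efield 2 (\<psi> {1,2}) x + (\<i>*1/2) * Efield 5 (\<psi> {1,2}) x"
  unfolding red2[OF assms]
  apply (simp add: dfun_expand dtheta_def de_form_def e_form_def theta_bas one_bas wedge_lin)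
  apply (simp add: wsign_eval form_eval)
  apply (simp add: algebra_simps)?
  done

lemma ev2_125:
  assumes "supp {{0,1},{0,2},{1,2}} \<psi>"
  shows "dform \<psi> {1,2,5} x = (\<i>*1/4) * \<psi> {0,2} x + (1/2) * Efield 3 (\<psi> {1,2}) x + (\<i>*1/2) * Efield 4 (\<psi> {1,2}) x + (1/4) * \<psi> {1,2} x"
  unfolding red2[OF assms]
  apply (simp add: dfun_expand dtheta_def de_form_def e_form_def theta_bas one_bas wedge_lin)
  apply (simp add: wsign_eval form_eval)
  apply (simp add: algebra_simps)?
  done

lemma ev2_034:
  assumes "supp {{0,1},{0,2},{1,2}} \<psi>"
  shows "dform \<psi> {0,3,4} x = 0"
  unfolding red2[OF assms]
  apply (simp add: dfun_expand dtheta_def de_form_def e_form_def theta_bas one_bas wedge_lin)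
  apply (simp add: wsign_eval form_eval)
  apply (simp add: algebra_simps)?
  done

lemma ev2_035:
  assumes "supp {{0,1},{0,2},{1,2}} \<psi>"
  shows "dform \<psi> {0,3,5} x = (\<i>*1/4) * \<psi> {0,1} x"
  unfolding red2[OF assms]
  apply (simp add: dfun_expand dtheta_def de_form_def e_form_def theta_bas one_bas wedge_lin)
  apply (simp add: wsign_eval form_eval)
  apply (simp add: algebra_simps)?
  done

lemma ev2_045:
  assumes "supp {{0,1},{0,2},{1,2}} \<psi>"
  shows "dform \<psi> {0,4,5} x = (1/4) * \<psi> {0,1} x"
  unfolding red2[OF assms]
  apply (simp add: dfun_expand dtheta_def de_form_def e_form_def theta_bas one_bas wedge_lin)
  apply (simp add: wsign_eval form_eval)
  apply (simp add: algebra_simps)?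
  done

lemma ev2_134:
  assumes "supp {{0,1},{0,2},{1,2}} \<psi>"
  shows "dform \<psi> {1,3,4} x = 0"
  unfolding red2[OF assms]
  apply (simp add: dfun_expand dtheta_def de_form_def e_form_def theta_bas one_bas wedge_lin)
  apply (simp add: wsign_eval form_eval)
  apply (simp add: algebra_simps)?
  done

lemma ev2_135:
  assumes "supp {{0,1},{0,2},{1,2}} \<psi>"
  shows "dform \<psi> {1,3,5} x = (1/4) * \<psi> {0,1} x"
  unfolding red2[OF assms]
  apply (simp add: dfun_expand dtheta_def de_form_def e_form_def theta_bas one_bas wedge_lin)
  apply (simp add: wsign_eval form_eval)
  apply (simp add: algebra_simps)?
  done

lemma ev2_145:
  assumes "supp {{0,1},{0,2},{1,2}} \<psi>"
  shows "dform \<psi> {1,4,5} x = (- \<i>*1/4) * \<psi> {0,1} x"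
  unfolding red2[OF assms]
  apply (simp add: dfun_expand dtheta_def de_form_def e_form_def theta_bas one_bas wedge_lin)
  apply (simp add: wsign_eval form_eval)
  apply (simp add: algebra_simps)?
  done

lemma ev2_234:
  assumes "supp {{0,1},{0,2},{1,2}} \<psi>"
  shows "dform \<psi> {2,3,4} x = 0"
  unfolding red2[OF assms]
  apply (simp add: dfun_expand dtheta_def de_form_def e_form_def theta_bas one_bas wedge_lin)
  apply (simp add: wsign_eval form_eval)
  apply (simp add: algebra_simps)?
  done

lemma ev2_235:
  assumes "supp {{0,1},{0,2},{1,2}} \<psi>"
  shows "dform \<psi> {2,3,5} x = (1/4) * \<psi> {0,2} x + (- \<i>*1/4) * \<psi> {1,2} x"
  unfolding red2[OF assms]
  apply (simp add: dfun_expand dtheta_def de_form_def e_form_def theta_bas one_bas wedge_lin)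
  apply (simp add: wsign_eval form_eval)
  apply (simp add: algebra_simps)?
  done

lemma ev2_245:
  assumes "supp {{0,1},{0,2},{1,2}} \<psi>"
  shows "dform \<psi> {2,4,5} x = (- \<i>*1/4) * \<psi> {0,2} x + (- 1/4) * \<psi> {1,2} x"
  unfolding red2[OF assms]
  apply (simp add: dfun_expand dtheta_def de_form_def e_form_def theta_bas one_bas wedge_lin)
  apply (simp add: wsign_eval form_eval)
  apply (simp add: algebra_simps)?
  done



lemma lin_add: "linear L \<Longrightarrow> L (x + y) = L x + L y"
  by (simp add: linear_iff)
lemma lin_scale: "linear L \<Longrightarrow> L (r *\<^sub>R x) = r *\<^sub>R L x"
  by (simp add: linear_iff)

lemma Iw_diff:
  assumes "Iw_fun f"
  shows "(f has_derivative frechet_derivative f (at q)) (at q)"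
proof -
  have "Ck (Suc 0) f" using assms unfolding Iw_fun_def smooth_fun_def by blast
  then have "f differentiable (at q)" by (subst (asm) Ck.simps) blast
  then show ?thesis by (simp add: frechet_derivative_works)
qed

lemma Iw_cont: "Iw_fun f \<Longrightarrow> continuous_on UNIV f"
proof -
  assume "Iw_fun f"
  then have "Ck 0 f" by (simp add: Iw_fun_def smooth_fun_def)
  then show ?thesis by simp
qed

lemma Efield_deriv:
  assumes "Iw_fun f"
  shows "Efield i f q = frechet_derivative f (at q)
     (fst (lie_gen i), fst (snd (lie_gen i)), snd (snd (lie_gen i)) + fst q * fst (snd (lie_gen i)))"
proof -
  define w where "w = (fst (lie_gen i), fst (snd (lie_gen i)), snd (snd (lie_gen i)) + fst q * fst (snd (lie_gen i)))"
  define D where "D = frechet_derivative f (at q)"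
  have path: "\<And>t::real. hmult q (t *\<^sub>R lie_gen i) = q + t *\<^sub>R w"
    by (cases q) (auto simp: hmult_def w_def algebra_simps scaleR_conv_of_real)
  have d1: "((\<lambda>t::real. q + t *\<^sub>R w) has_derivative (\<lambda>t. t *\<^sub>R w)) (at 0)"
    by (intro derivative_eq_intros) auto
  have d2: "(f has_derivative D) (at ((\<lambda>t::real. q + t *\<^sub>R w) 0))"
    using Iw_diff[OF assms] by (simp add: D_def)
  have lin: "linear D" using d2 has_derivative_linear by blast
  have "((f \<circ> (\<lambda>t::real. q + t *\<^sub>R w)) has_derivative (D \<circ> (\<lambda>t. t *\<^sub>R w))) (at 0)"
    by (rule diff_chain_at[OF d1 d2])
  then have "((\<lambda>t::real. f (q + t *\<^sub>R w)) has_vector_derivative D w) (at 0)"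
    unfolding has_vector_derivative_def using lin_scale[OF lin] by (simp add: o_def)
  then show ?thesis
    unfolding Efield_def path D_def[symmetric] w_def[symmetric]
    by (rule vector_derivative_at)
qed

lemma Efield_vals:
  assumes "Iw_fun f"
  shows "Efield 1 f q = frechet_derivative f (at q) (1,0,0)"
    "Efield 2 f q = frechet_derivative f (at q) (\<i>,0,0)"
    "Efield 3 f q = frechet_derivative f (at q) (0,1,fst q)"
    "Efield 4 f q = frechet_derivative f (at q) (0,\<i>,fst q * \<i>)"
    "Efield 5 f q = frechet_derivative f (at q) (0,0,1)"
    "Efield 6 f q = frechet_derivative f (at q) (0,0,\<i>)"
  by (simp_all add: Efield_deriv[OF assms] lie_gen_def)

lemma Ck_const: "Ck k (\<lambda>_. c)"
proof (induction k arbitrary: c)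
  case 0 then show ?case by simp
next
  case (Suc k) then show ?case by simp
qed

lemma Iw_const: "Iw_fun (\<lambda>_. c)"
  by (simp add: Iw_fun_def smooth_fun_def Ck_const)

lemma Efield_const: "Efield i (\<lambda>_. c) q = 0"
  by (simp add: Efield_def)

definition fl :: "complex \<Rightarrow> complex" where
  "fl z = of_int \<lfloor>Re z\<rfloor> + \<i> * of_int \<lfloor>Im z\<rfloor>"

lemma gauss_fl: "gauss_int (- fl z)"
  by (simp add: gauss_int_def fl_def)

lemma fl_box: "z - fl z \<in> cbox 0 (1 + \<i>)"
  by (simp add: in_cbox_complex_iff fl_def) linarith

lemma Iw_bounded:
  assumes "Iw_fun f"
  shows "\<exists>M. \<forall>q. norm (f q) \<le> M"
proof -
  define C :: "complex set" where "C = cbox 0 (1 + \<i>)"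
  define K where "K = C \<times> C \<times> C"
  have "compact K" unfolding K_def C_def by (intro compact_Times compact_cbox)
  moreover have "continuous_on K f"
    using Iw_cont[OF assms] continuous_on_subset by blast
  ultimately have "compact (f ` K)" by (rule compact_continuous_image[rotated])
  then obtain M where M: "\<And>y. y \<in> f ` K \<Longrightarrow> norm y \<le> M"
    using compact_imp_bounded bounded_iff by metis
  have "norm (f q) \<le> M" for q
  proof -
    obtain z1 z2 z3 where q: "q = (z1, z2, z3)" by (cases q)
    define g1 where "g1 = - fl z1"
    define g2 where "g2 = - fl z2"
    define g3 where "g3 = - fl (z3 + g1 * z2)"
    have G: "(g1, g2, g3) \<in> Gamma"
      by (simp add: Gamma_def g1_def g2_def g3_def gauss_fl)
    have inv: "f (hmult (g1, g2, g3) q) = f q"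
      using assms G unfolding Iw_fun_def by blast
    have "hmult (g1, g2, g3) q = (z1 - fl z1, z2 - fl z2, (z3 + g1 * z2) - fl (z3 + g1 * z2))"
      by (simp add: hmult_def q g1_def g2_def g3_def algebra_simps)
    then have "hmult (g1, g2, g3) q \<in> K"
      by (simp add: K_def C_def fl_box)
    then show ?thesis using M inv by force
  qed
  then show ?thesis by blast
qed

lemma lin_bounded_zero:
  fixes a b :: complex
  assumes "\<And>t::real. norm (a + b * of_real t) \<le> M"
  shows "b = 0"
proof (rule ccontr)
  assume b: "b \<noteq> 0"
  define t where "t = (M + norm a + 1) / norm b"
  have "norm (b * of_real t) \<le> norm (a + b * of_real t) + norm a"
    by (metis add.commute norm_diff_ineq add_diff_cancel_right' order_refl add_le_cancel_left norm_triangle_ineq4 diff_add_cancel)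
  also have "\<dots> \<le> M + norm a" using assms[of t] by simp
  finally have 1: "norm b * \<bar>t\<bar> \<le> M + norm a" by (simp add: norm_mult)
  have "0 \<le> M" using assms[of 0] norm_ge_zero order_trans by blast
  then have "\<bar>t\<bar> = t" using b by (simp add: t_def)
  then have "norm b * \<bar>t\<bar> = M + norm a + 1" using b by (simp add: t_def)
  with 1 show False by simp
qed

lemma holo_slice:
  fixes g :: "pt \<Rightarrow> complex" and u w :: pt
  assumes der: "\<And>q. (g has_derivative D q) (at q)"
    and bnd: "\<And>q. norm (g q) \<le> M"
    and eq: "\<And>q. D q u + \<i> * D q w = \<kappa>"
  shows "\<kappa> = 0 \<and> D q u = 0 \<and> D q w = 0"
proof -
  have lin: "linear (D q')" for q' using der has_derivative_linear by blast
  define P where "P \<zeta> = q + Re \<zeta> *\<^sub>R u + Im \<zeta> *\<^sub>R w" for \<zeta>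
  define H where "H \<zeta> = g (P \<zeta>) - \<kappa> * of_real (Re \<zeta>)" for \<zeta>
  have Hder: "(H has_field_derivative (- \<i> * D (P \<zeta>) w)) (at \<zeta>)" for \<zeta>
  proof -
    have dP: "(P has_derivative (\<lambda>h. Re h *\<^sub>R u + Im h *\<^sub>R w)) (at \<zeta>)"
      unfolding P_def by (intro derivative_eq_intros) auto
    have dg: "(g has_derivative D (P \<zeta>)) (at (P \<zeta>))" by (rule der)
    have c: "((g \<circ> P) has_derivative (D (P \<zeta>) \<circ> (\<lambda>h. Re h *\<^sub>R u + Im h *\<^sub>R w))) (at \<zeta>)"
      by (rule diff_chain_at[OF dP dg])
    have k: "((\<lambda>\<zeta>. \<kappa> * of_real (Re \<zeta>)) has_derivative (\<lambda>h. \<kappa> * of_real (Re h))) (at \<zeta>)"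
      by (intro derivative_eq_intros) auto
    have "(H has_derivative (\<lambda>h. D (P \<zeta>) (Re h *\<^sub>R u + Im h *\<^sub>R w) - \<kappa> * of_real (Re h))) (at \<zeta>)"
      unfolding H_def using has_derivative_diff[OF c k] by (simp add: o_def)
    moreover have "(\<lambda>h. D (P \<zeta>) (Re h *\<^sub>R u + Im h *\<^sub>R w) - \<kappa> * of_real (Re h)) = (*) (- \<i> * D (P \<zeta>) w)"
    proof
      fix h :: complex
      have e: "D (P \<zeta>) u = \<kappa> - \<i> * D (P \<zeta>) w" using eq[of "P \<zeta>"] by (simp add: algebra_simps)
      have "D (P \<zeta>) (Re h *\<^sub>R u + Im h *\<^sub>R w) = of_real (Re h) * D (P \<zeta>) u + of_real (Im h) * D (P \<zeta>) w"
        using lin_add[OF lin] lin_scale[OF lin] by (simp add: scaleR_conv_of_real)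
      also have "\<dots> = of_real (Re h) * (\<kappa> - \<i> * D (P \<zeta>) w) + of_real (Im h) * D (P \<zeta>) w"
        using e by simp
      finally show "D (P \<zeta>) (Re h *\<^sub>R u + Im h *\<^sub>R w) - \<kappa> * of_real (Re h) = - \<i> * D (P \<zeta>) w * h"
        by (subst (4) complex_eq) (simp add: algebra_simps)
    qed
    ultimately show ?thesis by (simp add: has_field_derivative_def)
  qed
  have holo: "H holomorphic_on UNIV"
    using Hder by (auto simp: holomorphic_on_def field_differentiable_def)
  have M0: "0 \<le> M" using bnd[of q] norm_ge_zero order_trans by blast
  have Hb: "norm (H \<zeta>) \<le> M + norm \<kappa> * norm \<zeta>" for \<zeta>
  proof -
    have "norm (H \<zeta>) \<le> norm (g (P \<zeta>)) + norm (\<kappa> * of_real (Re \<zeta>))"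
      unfolding H_def by (rule norm_triangle_ineq4)
    also have "\<dots> \<le> M + norm \<kappa> * norm \<zeta>"
      using bnd[of "P \<zeta>"] abs_Re_le_cmod[of \<zeta>]
      by (simp add: norm_mult) (meson add_mono mult_left_mono norm_ge_zero)
    finally show ?thesis .
  qed
  have poly: "H \<xi> = H 0 + deriv H 0 * \<xi>" for \<xi>
  proof -
    have "H \<xi> = (\<Sum>k\<le>1. (deriv ^^ k) H 0 / fact k * \<xi> ^ k)"
    proof (rule Liouville_polynomial[OF holo, of 1 "M + norm \<kappa>"])
      fix z :: complex assume z: "1 \<le> norm z"
      have "norm (H z) \<le> M + norm \<kappa> * norm z" by (rule Hb)
      also have "\<dots> \<le> M * norm z + norm \<kappa> * norm z"
        using M0 z by (simp add: mult_left_mono[of 1 "norm z" M, simplified])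
      finally show "norm (H z) \<le> (M + norm \<kappa>) * norm z ^ 1" by (simp add: algebra_simps)
    qed
    then show ?thesis by simp
  qed
  define d where "d = deriv H 0"
  have gP: "g (P \<xi>) = H 0 + d * \<xi> + \<kappa> * of_real (Re \<xi>)" for \<xi>
    using poly[of \<xi>] by (simp add: H_def d_def diff_eq_eq)
  have "d + \<kappa> = 0"
  proof (rule lin_bounded_zero[of "H 0" _ M])
    fix t :: real
    show "norm (H 0 + (d + \<kappa>) * of_real t) \<le> M"
      using bnd[of "P (of_real t)"] gP[of "of_real t"] by (simp add: algebra_simps)
  qed
  moreover have "d * \<i> = 0"
  proof (rule lin_bounded_zero[of "H 0" _ M])
    fix t :: real
    show "norm (H 0 + (d * \<i>) * of_real t) \<le> M"
      using bnd[of "P (\<i> * of_real t)"] gP[of "\<i> * of_real t"] by (simp add: algebra_simps)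
  qed
  ultimately have d0: "d = 0" and k0: "\<kappa> = 0" by auto
  have Hc: "H = (\<lambda>_. H 0)" using poly d0 by (auto simp: d_def)
  have "(H has_field_derivative 0) (at 0)" by (subst Hc) (rule DERIV_const)
  with Hder[of 0] have "- \<i> * D (P 0) w = 0" using DERIV_unique by blast
  then have w0: "D q w = 0" by (simp add: P_def)
  then have "D q u = 0" using eq[of q] k0 by simp
  with w0 k0 show ?thesis by simp
qed

lemma lin_zero6:
  fixes L :: "pt \<Rightarrow> complex"
  assumes lin: "linear L"
    and "L (1,0,0) = 0" "L (\<i>,0,0) = 0" "L (0,1,0) = 0" "L (0,\<i>,0) = 0" "L (0,0,1) = 0" "L (0,0,\<i>) = 0"
  shows "L v = 0"
proof -
  obtain a b c where v: "v = (a, b, c)" by (cases v)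
  have "v = Re a *\<^sub>R (1,0,0) + Im a *\<^sub>R (\<i>,0,0) + Re b *\<^sub>R (0,1,0) + Im b *\<^sub>R (0,\<i>,0)
          + Re c *\<^sub>R (0,0,1) + Im c *\<^sub>R (0,0,\<i>)"
    by (simp add: v complex_eq_iff)
  then have "L v = Re a *\<^sub>R L (1,0,0) + Im a *\<^sub>R L (\<i>,0,0) + Re b *\<^sub>R L (0,1,0) + Im b *\<^sub>R L (0,\<i>,0)
          + Re c *\<^sub>R L (0,0,1) + Im c *\<^sub>R L (0,0,\<i>)"
    by (simp only: lin_add[OF lin] lin_scale[OF lin])
  then show ?thesis using assms by simp
qed

lemma lin_z3:
  fixes L :: "pt \<Rightarrow> complex"
  assumes lin: "linear L" and "L (0,0,1) = 0" "L (0,0,\<i>) = 0"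
  shows "L (0,0,z) = 0"
proof -
  have "(0::complex,0::complex,z) = Re z *\<^sub>R (0,0,1) + Im z *\<^sub>R (0,0,\<i>)"
    by (simp add: complex_eq_iff)
  then have "L (0,0,z) = Re z *\<^sub>R L (0,0,1) + Im z *\<^sub>R L (0,0,\<i>)"
    by (simp only: lin_add[OF lin] lin_scale[OF lin])
  then show ?thesis using assms by simp
qed

lemma kappa_zero:
  assumes g: "Iw_fun g" and h: "\<And>x. Efield 1 g x + \<i> * Efield 6 g x = \<kappa>"
  shows "\<kappa> = 0"
proof -
  obtain M where M: "\<And>q. norm (g q) \<le> M" using Iw_bounded[OF g] by blast
  have eq: "frechet_derivative g (at q) (1,0,0) + \<i> * frechet_derivative g (at q) (0,0,\<i>) = \<kappa>" for q
    using h[of q] unfolding Efield_vals[OF g] .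
  from holo_slice[of g "\<lambda>q. frechet_derivative g (at q)" M "(1,0,0)" "(0,0,\<i>)" \<kappa> 0, OF Iw_diff[OF g] M eq]
  show ?thesis by blast
qed

lemma dbar_const:
  assumes g: "Iw_fun g"
    and h1: "\<And>x. Efield 1 g x + \<i> * Efield 6 g x = 0"
    and h2: "\<And>x. Efield 2 g x + \<i> * Efield 5 g x = 0"
    and h3: "\<And>x. Efield 3 g x + \<i> * Efield 4 g x = 0"
  shows "\<exists>c. g = (\<lambda>_. c)"
proof -
  define D where "D q = frechet_derivative g (at q)" for q
  have der: "\<And>q. (g has_derivative D q) (at q)" unfolding D_def by (rule Iw_diff[OF g])
  have lin: "linear (D q)" for q using der has_derivative_linear by blast
  obtain M where M: "\<And>q. norm (g q) \<le> M" using Iw_bounded[OF g] by blast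
  have eq1: "D q (1,0,0) + \<i> * D q (0,0,\<i>) = 0" for q
    using h1[of q] unfolding Efield_vals[OF g] D_def .
  have eq2: "D q (\<i>,0,0) + \<i> * D q (0,0,1) = 0" for q
    using h2[of q] unfolding Efield_vals[OF g] D_def .
  have A: "D q (1,0,0) = 0 \<and> D q (0,0,\<i>) = 0" for q
    using holo_slice[of g D M "(1,0,0)" "(0,0,\<i>)" 0 q, OF der M eq1] by blast
  have B: "D q (\<i>,0,0) = 0 \<and> D q (0,0,1) = 0" for q
    using holo_slice[of g D M "(\<i>,0,0)" "(0,0,1)" 0 q, OF der M eq2] by blast
  have z: "D q (0,0,z) = 0" for q z
    by (rule lin_z3[OF lin]) (use A B in blast)+
  have e3: "Efield 3 g q = D q (0,1,0)" for q
  proof -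
    have "Efield 3 g q = D q ((0,1,0) + (0,0,fst q))" unfolding Efield_vals[OF g] D_def by simp
    then show ?thesis unfolding lin_add[OF lin] z by simp
  qed
  have e4: "Efield 4 g q = D q (0,\<i>,0)" for q
  proof -
    have "Efield 4 g q = D q ((0,\<i>,0) + (0,0,fst q * \<i>))" unfolding Efield_vals[OF g] D_def by simp
    then show ?thesis unfolding lin_add[OF lin] z by simp
  qed
  have eq3: "D q (0,1,0) + \<i> * D q (0,\<i>,0) = 0" for q
    using h3[of q] unfolding e3 e4 .
  have C: "D q (0,1,0) = 0 \<and> D q (0,\<i>,0) = 0" for q
    using holo_slice[of g D M "(0,1,0)" "(0,\<i>,0)" 0 q, OF der M eq3] by blast
  have D0: "D q h = 0" for q h
    by (rule lin_zero6[OF lin]) (use A B C in blast)+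
  have "\<And>x. x \<in> UNIV \<Longrightarrow> (g has_derivative (\<lambda>h. 0)) (at x within UNIV)"
  proof -
    fix x :: pt
    have "D x = (\<lambda>h. 0)" using D0 by blast
    then show "(g has_derivative (\<lambda>h. 0)) (at x within UNIV)" using der[of x] by simp
  qed
  from has_derivative_zero_constant[OF convex_UNIV this] obtain c where "\<forall>x\<in>UNIV. g x = c" by blast
  then have "g = (\<lambda>_. c)" by (simp add: fun_eq_iff)
  then show ?thesis by blast
qed



lemma card1_sub3:
  assumes "X \<subseteq> {a,b,c}" "card X = 1"
  shows "X = {a} \<or> X = {b} \<or> X = {c}"
proof -
  obtain x where X: "X = {x}" using card_1_singleton_iff[THEN iffD1, OF assms(2)[unfolded One_nat_def]] by blast
  then have "x \<in> {a,b,c}" using assms(1) by blast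
  then have "x = a \<or> x = b \<or> x = c" by blast
  then show ?thesis using X by blast
qed

lemma card2_sub3:
  fixes a b c :: nat
  assumes "X \<subseteq> {a,b,c}" "card X = 2"
  shows "X = {a,b} \<or> X = {a,c} \<or> X = {b,c}"
proof -
  obtain x y where xy: "X = {x,y}" "x \<noteq> y" using card_2_iff[THEN iffD1, OF assms(2)] by blast
  have "x \<in> {a,b,c}" using assms(1) xy(1) by (simp add: subset_iff)
  moreover have "y \<in> {a,b,c}" using assms(1) xy(1) by (simp add: subset_iff)
  ultimately show ?thesis using xy by (auto simp: insert_commute)
qed

lemma card3_sub3:
  assumes "X \<subseteq> {a,b,c}" "card X = 3"
  shows "X = {a,b,c}"
proof -
  have f: "finite {a,b,c}" by simp
  have "card {a,b,c} \<le> 3" by (simp add: card_insert_le_m1)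
  then have "card {a,b,c} \<le> card X" using assms(2) by simp
  then show ?thesis using card_seteq[OF f assms(1)] by blast
qed

lemma card0_sub3:
  assumes "X \<subseteq> {a,b,c}" "card X = 0"
  shows "X = {}"
proof -
  have "finite X" using assms(1) finite_subset by blast
  then show ?thesis using assms(2) by simp
qed

lemma ot_XY:
  assumes "of_type p q S"
  obtains X Y where "S = X \<union> Y" "X \<subseteq> {0,1,2}" "Y \<subseteq> {3,4,5}" "card X = p" "card Y = q"
proof -
  have S6: "S \<subseteq> {0..<6}" using assms by (simp add: of_type_def)
  have "S = (S \<inter> {0,1,2}) \<union> (S \<inter> {3,4,5})"
  proof
    show "S \<subseteq> (S \<inter> {0,1,2}) \<union> (S \<inter> {3,4,5})"
    proof
      fix x assume "x \<in> S"
      then have "x < 6" using S6 by auto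
      then have "x = 0 \<or> x = 1 \<or> x = 2 \<or> x = 3 \<or> x = 4 \<or> x = 5" by linarith
      then show "x \<in> (S \<inter> {0,1,2}) \<union> (S \<inter> {3,4,5})" using \<open>x \<in> S\<close> by auto
    qed
  qed blast
  then show ?thesis using that assms by (auto simp: of_type_def)
qed

lemma ot10: "of_type 1 0 S \<Longrightarrow> S = {0} \<or> S = {1} \<or> S = {2}"
proof -
  assume "of_type 1 0 S"
  then obtain X Y where S: "S = X \<union> Y" and X: "X \<subseteq> {0,1,2}" "card X = 1" and Y: "Y \<subseteq> {3,4,5}" "card Y = 0"
    by (rule ot_XY)
  from card1_sub3[OF X] card0_sub3[OF Y] S show ?thesis by auto
qed

lemma ot20: "of_type 2 0 S \<Longrightarrow> S = {0,1} \<or> S = {0,2} \<or> S = {1,2}"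
proof -
  assume "of_type 2 0 S"
  then obtain X Y where S: "S = X \<union> Y" and X: "X \<subseteq> {0,1,2}" "card X = 2" and Y: "Y \<subseteq> {3,4,5}" "card Y = 0"
    by (rule ot_XY)
  from card2_sub3[OF X] card0_sub3[OF Y] S show ?thesis by auto
qed

lemma ot30: "of_type 3 0 S \<Longrightarrow> S = {0,1,2}"
proof -
  assume "of_type 3 0 S"
  then obtain X Y where S: "S = X \<union> Y" and X: "X \<subseteq> {0,1,2}" "card X = 3" and Y: "Y \<subseteq> {3,4,5}" "card Y = 0"
    by (rule ot_XY)
  from card3_sub3[OF X] card0_sub3[OF Y] S show ?thesis by auto
qed

lemma ot11: "of_type 1 1 S \<Longrightarrow> S = {0,3} \<or> S = {0,4} \<or> S = {0,5} \<or> S = {1,3} \<or> S = {1,4} \<or> S = {1,5}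
   \<or> S = {2,3} \<or> S = {2,4} \<or> S = {2,5}"
proof -
  assume "of_type 1 1 S"
  then obtain X Y where S: "S = X \<union> Y" and X: "X \<subseteq> {0,1,2}" "card X = 1" and Y: "Y \<subseteq> {3,4,5}" "card Y = 1"
    by (rule ot_XY)
  from card1_sub3[OF X] card1_sub3[OF Y] S show ?thesis by (elim disjE) (simp_all del: Un_insert_right)
qed

lemma ot02: "of_type 0 2 S \<Longrightarrow> S = {3,4} \<or> S = {3,5} \<or> S = {4,5}"
proof -
  assume "of_type 0 2 S"
  then obtain X Y where S: "S = X \<union> Y" and X: "X \<subseteq> {0,1,2}" "card X = 0" and Y: "Y \<subseteq> {3,4,5}" "card Y = 2"
    by (rule ot_XY)
  from card0_sub3[OF X] card2_sub3[OF Y] S show ?thesis by (elim disjE) (simp_all del: Un_insert_right)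
qed

lemma ot21: "of_type 2 1 S \<Longrightarrow> S = {0,1,3} \<or> S = {0,1,4} \<or> S = {0,1,5} \<or> S = {0,2,3} \<or> S = {0,2,4} \<or> S = {0,2,5}
   \<or> S = {1,2,3} \<or> S = {1,2,4} \<or> S = {1,2,5}"
proof -
  assume "of_type 2 1 S"
  then obtain X Y where S: "S = X \<union> Y" and X: "X \<subseteq> {0,1,2}" "card X = 2" and Y: "Y \<subseteq> {3,4,5}" "card Y = 1"
    by (rule ot_XY)
  from card2_sub3[OF X] card1_sub3[OF Y] S show ?thesis by (elim disjE) (simp_all del: Un_insert_right)
qed

lemma ot12: "of_type 1 2 S \<Longrightarrow> S = {0,3,4} \<or> S = {0,3,5} \<or> S = {0,4,5} \<or> S = {1,3,4} \<or> S = {1,3,5} \<or> S = {1,4,5}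
   \<or> S = {2,3,4} \<or> S = {2,3,5} \<or> S = {2,4,5}"
proof -
  assume "of_type 1 2 S"
  then obtain X Y where S: "S = X \<union> Y" and X: "X \<subseteq> {0,1,2}" "card X = 1" and Y: "Y \<subseteq> {3,4,5}" "card Y = 2"
    by (rule ot_XY)
  from card1_sub3[OF X] card2_sub3[OF Y] S show ?thesis by (elim disjE) (simp_all del: Un_insert_right)
qed




interpretation cf: vector_space cform
  by unfold_locales (auto simp: cform_def fun_eq_iff algebra_simps)

lemma proj0D: "proj p q \<omega> = 0 \<Longrightarrow> of_type p q S \<Longrightarrow> \<omega> S x = 0"
  unfolding proj_def by (drule fun_cong[of _ _ S], drule fun_cong[of _ _ x]) simp

lemma proj0I: "(\<And>S x. of_type p q S \<Longrightarrow> \<omega> S x = 0) \<Longrightarrow> proj p q \<omega> = 0"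
  by (auto simp: proj_def fun_eq_iff)

lemma pq_supp1: "pq_form 1 0 \<psi> \<Longrightarrow> supp {{0},{1},{2}} \<psi>"
  unfolding pq_form_def supp_def using ot10 by blast
lemma pq_supp2: "pq_form 2 0 \<psi> \<Longrightarrow> supp {{0,1},{0,2},{1,2}} \<psi>"
  unfolding pq_form_def supp_def using ot20 by blast
lemma pq_supp3: "pq_form 3 0 \<psi> \<Longrightarrow> supp {{0,1,2}} \<psi>"
  unfolding pq_form_def supp_def using ot30 by blast

lemma test: "of_type 1 1 {1,3}" "of_type 0 2 {3,5}" "of_type 2 1 {1,2,5}" "of_type 1 2 {0,3,5}" "of_type 2 2 {0,2,3,5}"
  by (simp_all add: of_type_def)

lemma H1_sub:
  assumes "\<psi> \<in> H_Dol_p0 1"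
  shows "\<exists>\<gamma>. \<psi> = cform \<gamma> (theta 2)"
proof -
  have pq: "pq_form 1 0 \<psi>" and db: "dbar 1 0 \<psi> = 0" and mb: "mubar 1 0 \<psi> = 0"
    using assms by (auto simp: H_Dol_p0_def)
  have sp: "supp {{0},{1},{2}} \<psi>" using pq by (rule pq_supp1)
  have iw: "Iw_fun (\<psi> T)" for T using pq by (simp add: pq_form_def)
  have db': "proj 1 1 (dform \<psi>) = 0" using db by (simp add: dbar_def)
  have mb': "proj 0 2 (dform \<psi>) = 0" using mb by (simp add: mubar_def numeral_2_eq_2)
  have Z: "dform \<psi> {1,3} x = 0" "dform \<psi> {1,4} x = 0" "dform \<psi> {1,5} x = 0"
     "dform \<psi> {2,3} x = 0" "dform \<psi> {2,4} x = 0" "dform \<psi> {2,5} x = 0" for x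
    by (rule proj0D[OF db'], simp add: of_type_def)+
  have Z0: "dform \<psi> {3,5} x = 0" for x
    by (rule proj0D[OF mb'], simp add: of_type_def)
  have m: "\<psi> {0} x = \<i> * \<psi> {1} x" for x
    using Z0[of x] unfolding ev1_35[OF sp] using i_squared by algebra
  have b1: "Efield 1 (\<psi> {1}) x + \<i> * Efield 6 (\<psi> {1}) x = 0" for x
    using Z(1)[of x] unfolding ev1_13[OF sp] using i_squared by algebra
  have b2: "Efield 2 (\<psi> {1}) x + \<i> * Efield 5 (\<psi> {1}) x = 0" for x
    using Z(2)[of x] unfolding ev1_14[OF sp] using i_squared by algebra
  have b3: "Efield 3 (\<psi> {1}) x + \<i> * Efield 4 (\<psi> {1}) x = 0" for x
    using Z(3)[of x] unfolding ev1_15[OF sp] using m[of x] i_squared by algebra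
  obtain \<beta> where bc: "\<psi> {1} = (\<lambda>_. \<beta>)" using dbar_const[OF iw b1 b2 b3] by blast
  have c1: "Efield 1 (\<psi> {2}) x + \<i> * Efield 6 (\<psi> {2}) x = \<i> * \<beta>" for x
    using Z(4)[of x] unfolding ev1_23[OF sp] bc using m[of x, unfolded bc] i_squared by algebra
  have "\<i> * \<beta> = 0" by (rule kappa_zero[OF iw c1])
  then have b0: "\<beta> = 0" by simp
  have c1': "Efield 1 (\<psi> {2}) x + \<i> * Efield 6 (\<psi> {2}) x = 0" for x
    using c1[of x] b0 by simp
  have c2: "Efield 2 (\<psi> {2}) x + \<i> * Efield 5 (\<psi> {2}) x = 0" for x
    using Z(5)[of x] unfolding ev1_24[OF sp] bc b0 using m[of x, unfolded bc b0] i_squared by algebra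
  have c3: "Efield 3 (\<psi> {2}) x + \<i> * Efield 4 (\<psi> {2}) x = 0" for x
    using Z(6)[of x] unfolding ev1_25[OF sp] using i_squared by algebra
  obtain \<gamma> where cc: "\<psi> {2} = (\<lambda>_. \<gamma>)" using dbar_const[OF iw c1' c2 c3] by blast
  have "\<psi> = cform \<gamma> (theta 2)"
  proof (intro ext)
    fix S x
    show "\<psi> S x = cform \<gamma> (theta 2) S x"
    proof (cases "S = {0} \<or> S = {1} \<or> S = {2}")
      case True
      then show ?thesis using m[of x] bc b0 cc by (auto simp: cform_def theta_def)
    next
      case False
      then show ?thesis using sp by (auto simp: supp_def cform_def theta_def)
    qed
  qed
  then show ?thesis by blast
qed

lemma H1_sup: "cform \<gamma> (theta 2) \<in> H_Dol_p0 1"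
proof -
  define v where "v = cform \<gamma> (theta 2)"
  have vS: "v S = (\<lambda>_. if S = {2} then \<gamma> else 0)" for S
    by (auto simp: v_def cform_def theta_def fun_eq_iff)
  have v0: "v {0} = (\<lambda>_. 0)" "v {1} = (\<lambda>_. 0)" "v {2} = (\<lambda>_. \<gamma>)" by (simp_all add: vS)
  have sp: "supp {{0},{1},{2}} v" by (auto simp: supp_def vS)
  have t2: "of_type 1 0 {2}" by (simp add: of_type_def)
  have pq: "pq_form 1 0 v"
    unfolding pq_form_def
  proof (intro conjI allI impI)
    fix S assume "\<not> of_type 1 0 S"
    then have "S \<noteq> {2}" using t2 by blast
    then show "v S = (\<lambda>_. 0)" by (simp add: vS)
  next
    fix S show "Iw_fun (v S)" unfolding vS by (rule Iw_const)
  qed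
  have "proj 1 1 (dform v) = 0"
  proof (rule proj0I)
    fix S x assume "of_type 1 1 S"
    from ot11[OF this] show "dform v S x = 0"
      by (elim disjE) (simp_all add: ev1_03[OF sp] ev1_04[OF sp] ev1_05[OF sp] ev1_13[OF sp] ev1_14[OF sp] ev1_15[OF sp] ev1_23[OF sp] ev1_24[OF sp] ev1_25[OF sp] ev1_03[OF sp, unfolded One_nat_def] ev1_04[OF sp, unfolded One_nat_def] ev1_05[OF sp, unfolded One_nat_def] ev1_13[OF sp, unfolded One_nat_def] ev1_14[OF sp, unfolded One_nat_def] ev1_15[OF sp, unfolded One_nat_def] ev1_23[OF sp, unfolded One_nat_def] ev1_24[OF sp, unfolded One_nat_def] ev1_25[OF sp, unfolded One_nat_def] v0 v0[unfolded One_nat_def] Efield_const)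
  qed
  then have db: "dbar 1 0 v = 0" by (simp add: dbar_def)
  have "proj 0 2 (dform v) = 0"
  proof (rule proj0I)
    fix S x assume "of_type 0 2 S"
    from ot02[OF this] show "dform v S x = 0"
      by (elim disjE) (simp_all add: ev1_34[OF sp] ev1_35[OF sp] ev1_45[OF sp] ev1_34[OF sp, unfolded One_nat_def] ev1_35[OF sp, unfolded One_nat_def] ev1_45[OF sp, unfolded One_nat_def] v0 v0[unfolded One_nat_def] Efield_const)
  qed
  then have mb: "mubar 1 0 v = 0" by (simp add: mubar_def numeral_2_eq_2)
  show ?thesis using pq db mb by (simp add: H_Dol_p0_def v_def)
qed

definition w2 :: form where
  "w2 = cform \<i> (wedge (theta 0) (theta 2)) + wedge (theta 1) (theta 2)"

lemma w2_eval: "w2 S x = (if S = {0,2} then \<i> else if S = {1,2} then 1 else 0)"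
  unfolding w2_def theta_bas
  apply (simp add: wedge_lin)
  apply (simp add: wsign_eval form_eval insert_commute)
  done

lemma H2_sub:
  assumes "\<psi> \<in> H_Dol_p0 2"
  shows "\<exists>\<gamma>. \<psi> = cform \<gamma> w2"
proof -
  have pq: "pq_form 2 0 \<psi>" and db: "dbar 2 0 \<psi> = 0" and mb: "mubar 2 0 \<psi> = 0"
    using assms by (auto simp: H_Dol_p0_def)
  have sp: "supp {{0,1},{0,2},{1,2}} \<psi>" using pq by (rule pq_supp2)
  have iw: "Iw_fun (\<psi> T)" for T using pq by (simp add: pq_form_def)
  have db': "proj 2 1 (dform \<psi>) = 0" using db by (simp add: dbar_def)
  have mb': "proj 1 2 (dform \<psi>) = 0" using mb by (simp add: mubar_def numeral_2_eq_2)
  have Z: "dform \<psi> {1,2,3} x = 0" "dform \<psi> {1,2,4} x = 0" "dform \<psi> {1,2,5} x = 0" for x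
    by (rule proj0D[OF db'], simp add: of_type_def)+
  have Z1: "dform \<psi> {0,3,5} x = 0" "dform \<psi> {2,3,5} x = 0" for x
    by (rule proj0D[OF mb'], simp add: of_type_def)+
  have a0: "\<psi> {0,1} x = 0" for x
    using Z1(1)[of x] unfolding ev2_035[OF sp] using i_squared by algebra
  have m: "\<psi> {0,2} x = \<i> * \<psi> {1,2} x" for x
    using Z1(2)[of x] unfolding ev2_235[OF sp] using i_squared by algebra
  have c1: "Efield 1 (\<psi> {1,2}) x + \<i> * Efield 6 (\<psi> {1,2}) x = 0" for x
    using Z(1)[of x] unfolding ev2_123[OF sp] using a0[of x] i_squared by algebra
  have c2: "Efield 2 (\<psi> {1,2}) x + \<i> * Efield 5 (\<psi> {1,2}) x = 0" for x
    using Z(2)[of x] unfolding ev2_124[OF sp] using a0[of x] i_squared by algebra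
  have c3: "Efield 3 (\<psi> {1,2}) x + \<i> * Efield 4 (\<psi> {1,2}) x = 0" for x
    using Z(3)[of x] unfolding ev2_125[OF sp] using m[of x] i_squared by algebra
  obtain \<gamma> where cc: "\<psi> {1,2} = (\<lambda>_. \<gamma>)" using dbar_const[OF iw c1 c2 c3] by blast
  have "\<psi> = cform \<gamma> w2"
  proof (intro ext)
    fix S x
    show "\<psi> S x = cform \<gamma> w2 S x"
    proof (cases "S = {0,1} \<or> S = {0,2} \<or> S = {1,2}")
      case True
      then show ?thesis using m[of x] a0[of x] cc
        by (auto simp: cform_def w2_eval insert_commute)
    next
      case False
      then have "\<psi> S = (\<lambda>_. 0)" using sp by (auto simp: supp_def)
      moreover have "S \<noteq> {0,2}" "S \<noteq> {1,2}" using False by auto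
      ultimately show ?thesis by (simp add: cform_def w2_eval)
    qed
  qed
  then show ?thesis by blast
qed

lemma H2_sup: "cform \<gamma> w2 \<in> H_Dol_p0 2"
proof -
  define v where "v = cform \<gamma> w2"
  have vS: "v S = (\<lambda>_. \<gamma> * (if S = {0,2} then \<i> else if S = {1,2} then 1 else 0))" for S
    by (auto simp: v_def cform_def w2_eval fun_eq_iff)
  have v0: "v {0,1} = (\<lambda>_. 0)" "v {0,2} = (\<lambda>_. \<i> * \<gamma>)" "v {1,2} = (\<lambda>_. \<gamma>)"
    by (simp_all add: vS set_eq_subset mult.commute)
  have sp: "supp {{0,1},{0,2},{1,2}} v" by (auto simp: supp_def vS)
  have t2: "of_type 2 0 {0,2}" "of_type 2 0 {1,2}" by (simp_all add: of_type_def)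
  have pq: "pq_form 2 0 v"
    unfolding pq_form_def
  proof (intro conjI allI impI)
    fix S assume "\<not> of_type 2 0 S"
    then have "S \<noteq> {0,2}" "S \<noteq> {1,2}" using t2 by blast+
    then show "v S = (\<lambda>_. 0)" by (simp add: vS)
  next
    fix S show "Iw_fun (v S)" unfolding vS by (rule Iw_const)
  qed
  have "proj 2 1 (dform v) = 0"
  proof (rule proj0I)
    fix S x assume "of_type 2 1 S"
    from ot21[OF this] show "dform v S x = 0"
      by (elim disjE) (simp_all add: ev2_013[OF sp] ev2_014[OF sp] ev2_015[OF sp] ev2_023[OF sp] ev2_024[OF sp] ev2_025[OF sp] ev2_123[OF sp] ev2_124[OF sp] ev2_125[OF sp] ev2_013[OF sp, unfolded One_nat_def] ev2_014[OF sp, unfolded One_nat_def] ev2_015[OF sp, unfolded One_nat_def] ev2_023[OF sp, unfolded One_nat_def] ev2_024[OF sp, unfolded One_nat_def] ev2_025[OF sp, unfolded One_nat_def] ev2_123[OF sp, unfolded One_nat_def] ev2_124[OF sp, unfolded One_nat_def] ev2_125[OF sp, unfolded One_nat_def] v0 v0[unfolded One_nat_def] Efield_const)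
  qed
  then have db: "dbar 2 0 v = 0" by (simp add: dbar_def)
  have "proj 1 2 (dform v) = 0"
  proof (rule proj0I)
    fix S x assume "of_type 1 2 S"
    from ot12[OF this] show "dform v S x = 0"
      by (elim disjE) (simp_all add: ev2_034[OF sp] ev2_035[OF sp] ev2_045[OF sp] ev2_134[OF sp] ev2_135[OF sp] ev2_145[OF sp] ev2_234[OF sp] ev2_235[OF sp] ev2_245[OF sp] ev2_034[OF sp, unfolded One_nat_def] ev2_035[OF sp, unfolded One_nat_def] ev2_045[OF sp, unfolded One_nat_def] ev2_134[OF sp, unfolded One_nat_def] ev2_135[OF sp, unfolded One_nat_def] ev2_145[OF sp, unfolded One_nat_def] ev2_234[OF sp, unfolded One_nat_def] ev2_235[OF sp, unfolded One_nat_def] ev2_245[OF sp, unfolded One_nat_def] v0 v0[unfolded One_nat_def] Efield_const)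
  qed
  then have mb: "mubar 2 0 v = 0" by (simp add: mubar_def numeral_2_eq_2)
  show ?thesis using pq db mb by (simp add: H_Dol_p0_def v_def)
qed

lemma H3_sub:
  assumes "\<psi> \<in> H_Dol_p0 3"
  shows "\<psi> = 0"
proof -
  have pq: "pq_form 3 0 \<psi>" and mb: "mubar 3 0 \<psi> = 0"
    using assms by (auto simp: H_Dol_p0_def)
  have sp: "supp {{0,1,2}} \<psi>" using pq by (rule pq_supp3)
  have mb': "proj 2 2 (dform \<psi>) = 0" using mb by (simp add: mubar_def numeral_2_eq_2)
  have Z: "dform \<psi> {0,2,3,5} x = 0" for x
    by (rule proj0D[OF mb'], simp add: of_type_def)
  have a0: "\<psi> {0,1,2} x = 0" for x
    using Z[of x] unfolding ev3_0235[OF sp] using i_squared by algebra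
  show ?thesis
  proof (intro ext)
    fix S x
    show "\<psi> S x = 0 S x"
      using sp a0[of x] by (cases "S = {0,1,2}") (auto simp: supp_def)
  qed
qed

lemma dim_single: "v \<noteq> 0 \<Longrightarrow> cf.dim {v} = 1"
proof -
  assume "v \<noteq> 0"
  then have "cf.independent {v}" by (simp add: cf.independent_insert)
  then show ?thesis by (simp add: cf.dim_eq_card_independent)
qed

lemma dim_zero: "cf.dim {0} = 0"
proof -
  have "cf.dim {0} = cf.dim (cf.span {})" by simp
  also have "\<dots> = cf.dim {}" by (rule cf.dim_span)
  also have "\<dots> = 0" using cf.dim_eq_card_independent[OF cf.independent_empty] by simp
  finally show ?thesis .
qed

theorem mainTheorem11:
  shows "h_Dol_p0 1 = 1
       \<and> H_Dol_p0 1 = module.span cform {theta 2}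
       \<and> h_Dol_p0 2 = 1
       \<and> H_Dol_p0 2 = module.span cform
            {cform \<i> (wedge (theta 0) (theta 2)) + wedge (theta 1) (theta 2)}
       \<and> h_Dol_p0 3 = 0"
proof -
  have S1: "H_Dol_p0 1 = cf.span {theta 2}"
    unfolding cf.span_singleton using H1_sub H1_sup by blast
  have S2: "H_Dol_p0 2 = cf.span {w2}"
    unfolding cf.span_singleton using H2_sub H2_sup by blast
  have t2: "theta 2 \<noteq> 0"
  proof
    assume "theta 2 = 0"
    then have "theta 2 {2} (0,0,0) = 0" by simp
    then show False by (simp add: theta_def)
  qed
  have w2nz: "w2 \<noteq> 0"
  proof
    assume "w2 = 0"
    then have "w2 {0,2} (0,0,0) = 0" by simp
    then show False by (simp add: w2_eval)
  qed
  have h1: "h_Dol_p0 1 = 1"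
    unfolding h_Dol_p0_def S1 cf.dim_span using dim_single[OF t2] .
  have h2: "h_Dol_p0 2 = 1"
    unfolding h_Dol_p0_def S2 cf.dim_span using dim_single[OF w2nz] .
  have "H_Dol_p0 3 \<subseteq> {0}" using H3_sub by blast
  then have H3: "H_Dol_p0 3 = {} \<or> H_Dol_p0 3 = {0}" by (rule subset_singletonD)
  have d0: "cf.dim {} = 0" using cf.dim_eq_card_independent[OF cf.independent_empty] by simp
  have h3: "h_Dol_p0 3 = 0"
    using H3 proof
    assume "H_Dol_p0 3 = {}" then show ?thesis unfolding h_Dol_p0_def using d0 by simp
  next
    assume "H_Dol_p0 3 = {0}" then show ?thesis unfolding h_Dol_p0_def using dim_zero by simp
  qed
  have S2': "H_Dol_p0 2 = module.span cform
            {cform \<i> (wedge (theta 0) (theta 2)) + wedge (theta 1) (theta 2)}"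
    using S2 unfolding w2_def .
  show ?thesis by (intro conjI h1 S1 h2 S2' h3)
qed


end
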